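(* In the setting of the context (QFSR scheme with $\kappa=1/3$, $\kappa_3=-2/3$, $\theta_2=2/3$), suppose the flux $f$ is a quadratic polynomial in $u$. Let $\mathcal{E}_j=(\Phi_{j+1/2}-\Phi_{j-1/2})/h$ evaluated on exact nodal values. Then as $h\to0$, with derivatives at $x_j$, $$\mathcal{E}_j=\frac{\partial f}{\partial x}+\left[\frac1{120}\frac{\partial f}{\partial u}\frac{\partial^5 u}{\partial x^5}-\frac{5}{216}\frac{\partial^2 f}{\partial u^2}\frac{\partial^2 u}{\partial x^2}\frac{\partial^3 u}{\partial x^3}\right]h^4+O(h^5),$$ where $f$ denotes $f(u(x))$ and $\partial f/\partial u$ is evaluated at $u(x_j)$.
   Context: Let $h>0$, uniform grid $x_i=ih$, $i\in\mathbb{Z}$. Let $u$ be a smooth real function of $x$, $u_i=u(x_i)$; let $f$ (flux) and $D$ (dissipation coefficient) be smooth real functions of one variable. Define successive central differences $(u_x)_i=(u_{i+1}-u_{i-1})/(2h)$, $(u_{xx})_i=((u_x)_{i+1}-(u_x)_{i-1})/(2h)$. For the face $i+1/2$ with $j=i$, $k=i+1$, let $T_j=\frac h4((u_x)_k-(u_x)_j)-\frac{h^2}{4}(u_{xx})_j$, $T_k=\frac h4((u_x)_k-(u_x)_j)-\frac{h^2}{4}(u_{xx})_k$, and reconstructed states (parameters $\kappa,\kappa_3$) $u_L=\kappa\frac{u_j+u_k}{2}+(1-\kappa)[u_j+\frac h2(u_x)_j]+\kappa_3T_j$, $u_R=\kappa\frac{u_j+u_k}{2}+(1-\kappa)[u_k-\frac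 h2(u_x)_k]+\kappa_3T_k$. With $\Delta_L=u_L-u_j$, $\Delta_R=u_R-u_k$ and parameter $\theta_2$, the reconstructed fluxes are $f_L=f(u_j)+f'(u_j)\Delta_L+\frac{\theta_2}{2}f''(u_j)\Delta_L^2$ and $f_R=f(u_k)+f'(u_k)\Delta_R+\frac{\theta_2}{2}f''(u_k)\Delta_R^2$. Numerical flux: $\Phi_{i+1/2}=\frac12(f_L+f_R)-\frac12D_{i+1/2}(u_R-u_L)$, with $D_{i+1/2}=\bar D(u_i,u_{i+1})$ for a smooth symmetric $\bar D$ with $\bar D(v,v)=D(v)$. *)

theory Defs
  imports "HOL-Analysis.Analysis"
begin

definition smooth1 :: "(real \<Rightarrow> real) \<Rightarrow> bool" where
  "smooth1 g \<longleftrightarrow> (\<forall>n x. ((deriv ^^ n) g) differentiable (at x))"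

definition pd1 :: "(real \<Rightarrow> real \<Rightarrow> real) \<Rightarrow> real \<Rightarrow> real \<Rightarrow> real" where
  "pd1 g = (\<lambda>a b. deriv (\<lambda>t. g t b) a)"
definition pd2 :: "(real \<Rightarrow> real \<Rightarrow> real) \<Rightarrow> real \<Rightarrow> real \<Rightarrow> real" where
  "pd2 g = (\<lambda>a b. deriv (\<lambda>t. g a t) b)"

definition smooth2 :: "(real \<Rightarrow> real \<Rightarrow> real) \<Rightarrow> bool" where
  "smooth2 g \<longleftrightarrow> (\<forall>m n p. (\<lambda>q. ((pd1 ^^ m) ((pd2 ^^ n) g)) (fst q) (snd q))
                         differentiable (at p))"

definition cdx :: "(real \<Rightarrow> real) \<Rightarrow> real \<Rightarrow> real \<Rightarrow> real" where
  "cdx u h y = (u (y + h) - u (y - h)) / (2 * h)"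
definition cdxx :: "(real \<Rightarrow> real) \<Rightarrow> real \<Rightarrow> real \<Rightarrow> real" where
  "cdxx u h y = (cdx u h (y + h) - cdx u h (y - h)) / (2 * h)"

text \<open>Quantities at the face between nodes y (index j) and y+h (index k = j+1).\<close>
definition TL :: "(real \<Rightarrow> real) \<Rightarrow> real \<Rightarrow> real \<Rightarrow> real" where
  "TL u h y = h / 4 * (cdx u h (y + h) - cdx u h y) - h^2 / 4 * cdxx u h y"
definition TR :: "(real \<Rightarrow> real) \<Rightarrow> real \<Rightarrow> real \<Rightarrow> real" where
  "TR u h y = h / 4 * (cdx u h (y + h) - cdx u h y) - h^2 / 4 * cdxx u h (y + h)"

definition uL :: "real \<Rightarrow> real \<Rightarrow> (real \<Rightarrow> real) \<Rightarrow> real \<Rightarrow> real \<Rightarrow> real" where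
  "uL \<kappa> \<kappa>3 u h y = \<kappa> * (u y + u (y + h)) / 2 + (1 - \<kappa>) * (u y + h / 2 * cdx u h y)
                    + \<kappa>3 * TL u h y"
definition uR :: "real \<Rightarrow> real \<Rightarrow> (real \<Rightarrow> real) \<Rightarrow> real \<Rightarrow> real \<Rightarrow> real" where
  "uR \<kappa> \<kappa>3 u h y = \<kappa> * (u y + u (y + h)) / 2
                    + (1 - \<kappa>) * (u (y + h) - h / 2 * cdx u h (y + h)) + \<kappa>3 * TR u h y"

definition fL :: "real \<Rightarrow> real \<Rightarrow> real \<Rightarrow> (real \<Rightarrow> real) \<Rightarrow> (real \<Rightarrow> real) \<Rightarrow> real \<Rightarrow> real \<Rightarrow> real" where
  "fL \<kappa> \<kappa>3 \<theta>2 f u h y =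
     (let d = uL \<kappa> \<kappa>3 u h y - u y
      in f (u y) + deriv f (u y) * d + \<theta>2 / 2 * deriv (deriv f) (u y) * d^2)"
definition fR :: "real \<Rightarrow> real \<Rightarrow> real \<Rightarrow> (real \<Rightarrow> real) \<Rightarrow> (real \<Rightarrow> real) \<Rightarrow> real \<Rightarrow> real \<Rightarrow> real" where
  "fR \<kappa> \<kappa>3 \<theta>2 f u h y =
     (let d = uR \<kappa> \<kappa>3 u h y - u (y + h)
      in f (u (y + h)) + deriv f (u (y + h)) * d
         + \<theta>2 / 2 * deriv (deriv f) (u (y + h)) * d^2)"

definition Phi :: "real \<Rightarrow> real \<Rightarrow> real \<Rightarrow> (real \<Rightarrow> real) \<Rightarrow> (real \<Rightarrow> real \<Rightarrow> real)
                   \<Rightarrow> (real \<Rightarrow> real) \<Rightarrow> real \<Rightarrow> real \<Rightarrow> real" where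
  "Phi \<kappa> \<kappa>3 \<theta>2 f Dbar u h y =
     (fL \<kappa> \<kappa>3 \<theta>2 f u h y + fR \<kappa> \<kappa>3 \<theta>2 f u h y) / 2
     - Dbar (u y) (u (y + h)) * (uR \<kappa> \<kappa>3 u h y - uL \<kappa> \<kappa>3 u h y) / 2"

definition QFSR_err :: "(real \<Rightarrow> real) \<Rightarrow> (real \<Rightarrow> real \<Rightarrow> real) \<Rightarrow> (real \<Rightarrow> real)
                        \<Rightarrow> real \<Rightarrow> real \<Rightarrow> real" where
  "QFSR_err f Dbar u h x =
     (Phi (1/3) (-2/3) (2/3) f Dbar u h x - Phi (1/3) (-2/3) (2/3) f Dbar u h (x - h)) / h"

end

theory Submission
  imports Defs
begin


definition PF :: "real \<Rightarrow> real \<Rightarrow> real \<Rightarrow> real \<Rightarrow> real \<Rightarrow> real \<Rightarrow> real \<Rightarrow> real \<Rightarrow> real \<Rightarrow> real \<Rightarrow> real" where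
  "PF a b c D wm2 wm1 w0 w1 w2 w3 =
    (let TLv = (w2 - w0 - w1 + wm1)/8 - (w2 - 2 * w0 + wm2)/16;
         TRv = (w2 - w0 - w1 + wm1)/8 - (w3 - 2 * w1 + wm1)/16;
         uLv = 1/3 * (w0+w1)/2 + (1 - 1/3) * (w0 + (w1 - wm1)/4) + (-2/3) * TLv;
         uRv = 1/3 * (w0+w1)/2 + (1 - 1/3) * (w1 - (w2 - w0)/4) + (-2/3) * TRv;
         dL = uLv - w0; dR = uRv - w1
     in ((a + b * w0 + c * w0^2 + (b + 2 * c * w0) * dL + 2/3/2 * (2 * c) * dL^2)
         + (a + b * w1 + c * w1^2 + (b + 2 * c * w1) * dR + 2/3/2 * (2 * c) * dR^2))/2
        - D * (uRv - uLv)/2)"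

lemma deriv_quad: fixes a b c :: real shows "deriv (\<lambda>v. a + b * v + c * v^2) = (\<lambda>v. b + 2 * c * v)"
proof
  fix v :: real
  have "((\<lambda>v. a + b * v + c * v^2) has_real_derivative (b + 2 * c * v)) (at v)"
    by (auto intro!: derivative_eq_intros)
  then show "deriv (\<lambda>v. a + b * v + c * v^2) v = b + 2 * c * v" by (rule DERIV_imp_deriv)
qed

lemma deriv_lin: fixes b c :: real shows "deriv (\<lambda>v. b + 2 * c * v) = (\<lambda>v. 2 * c)"
proof
  fix v :: real
  have "((\<lambda>v. b + 2 * c * v) has_real_derivative (2 * c)) (at v)"
    by (auto intro!: derivative_eq_intros)
  then show "deriv (\<lambda>v. b + 2 * c * v) v = 2 * c" by (rule DERIV_imp_deriv)
qed

lemma cdx_h: "h \<noteq> 0 \<Longrightarrow> h / 2 * cdx u h y = (u (y+h) - u (y-h))/4"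
  unfolding cdx_def by (simp add: field_simps)

lemma TL_eq: "h \<noteq> 0 \<Longrightarrow> TL u h y = (u (y+2 * h) - u y - u (y+h) + u (y-h))/8 - (u (y+2 * h) - 2 * u y + u (y-2 * h))/16"
proof -
  assume h: "h \<noteq> 0"
  have e: "y + h + h = y + 2 * h" "y + h - h = y" "y - h + h = y" "y - h - h = y - 2 * h" by simp_all
  show ?thesis unfolding TL_def cdxx_def cdx_def e using h by (simp add: field_simps power2_eq_square)
qed

lemma TR_eq: "h \<noteq> 0 \<Longrightarrow> TR u h y = (u (y+2 * h) - u y - u (y+h) + u (y-h))/8 - (u (y+3 * h) - 2 * u (y+h) + u (y-h))/16"
proof -
  assume h: "h \<noteq> 0"
  have e: "y + h + h = y + 2 * h" "y + h - h = y" "y + 2 * h + h = y + 3 * h" "y + 2 * h - h = y + h" "y - h + h = y" by simp_all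
  show ?thesis unfolding TR_def cdxx_def cdx_def e using h by (simp add: field_simps power2_eq_square)
qed

lemma cdx_h2: "h \<noteq> 0 \<Longrightarrow> h / 2 * cdx u h (y+h) = (u (y+2 * h) - u y)/4"
  unfolding cdx_def by (simp add: field_simps mult_2)

lemma Phi_expand:
  assumes h: "h \<noteq> 0"
  shows "Phi (1/3) (-2/3) (2/3) (\<lambda>v. a + b * v + c * v^2) Dbar u h y
     = PF a b c (Dbar (u y) (u (y+h))) (u (y-2 * h)) (u (y-h)) (u y) (u (y+h)) (u (y+2 * h)) (u (y+3 * h))"
  unfolding Phi_def fL_def fR_def uL_def uR_def PF_def Let_def deriv_quad deriv_lin
    TL_eq[OF h] TR_eq[OF h] cdx_h[OF h] cdx_h2[OF h]
  by (simp add: algebra_simps)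



definition bnd :: "(real \<Rightarrow> real) \<Rightarrow> bool" where
  "bnd g \<longleftrightarrow> (\<exists>K. eventually (\<lambda>h. \<bar>g h\<bar> \<le> K) (at_right 0))"

lemma bnd_const: "bnd (\<lambda>h. k)"
  unfolding bnd_def by (rule exI[of _ "\<bar>k\<bar>"]) simp

lemma bnd_id: "bnd (\<lambda>h. h)"
  unfolding bnd_def
proof (rule exI[of _ 1])
  show "eventually (\<lambda>h::real. \<bar>h\<bar> \<le> 1) (at_right 0)"
    using eventually_at_right_real[of 0 1] by (rule eventually_mono) auto
qed

lemma bnd_add: "bnd f \<Longrightarrow> bnd g \<Longrightarrow> bnd (\<lambda>h. f h + g h)"
  unfolding bnd_def
proof (elim exE)
  fix K L assume K: "eventually (\<lambda>h. \<bar>f h\<bar> \<le> K) (at_right 0)" and L: "eventually (\<lambda>h. \<bar>g h\<bar> \<le> L) (at_right 0)"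
  show "\<exists>M. eventually (\<lambda>h. \<bar>f h + g h\<bar> \<le> M) (at_right 0)"
    by (rule exI[of _ "K + L"], rule eventually_mono[OF eventually_conj[OF K L]]) auto
qed

lemma bnd_diff: "bnd f \<Longrightarrow> bnd g \<Longrightarrow> bnd (\<lambda>h. f h - g h)"
  unfolding bnd_def
proof (elim exE)
  fix K L assume K: "eventually (\<lambda>h. \<bar>f h\<bar> \<le> K) (at_right 0)" and L: "eventually (\<lambda>h. \<bar>g h\<bar> \<le> L) (at_right 0)"
  show "\<exists>M. eventually (\<lambda>h. \<bar>f h - g h\<bar> \<le> M) (at_right 0)"
    by (rule exI[of _ "K + L"], rule eventually_mono[OF eventually_conj[OF K L]]) auto
qed

lemma bnd_mult: "bnd f \<Longrightarrow> bnd g \<Longrightarrow> bnd (\<lambda>h. f h * g h)"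
  unfolding bnd_def
proof (elim exE)
  fix K L assume K: "eventually (\<lambda>h. \<bar>f h\<bar> \<le> K) (at_right 0)" and L: "eventually (\<lambda>h. \<bar>g h\<bar> \<le> L) (at_right 0)"
  show "\<exists>M. eventually (\<lambda>h. \<bar>f h * g h\<bar> \<le> M) (at_right 0)"
  proof (rule exI[of _ "K * L"], rule eventually_mono[OF eventually_conj[OF K L]])
    fix h assume "\<bar>f h\<bar> \<le> K \<and> \<bar>g h\<bar> \<le> L"
    then show "\<bar>f h * g h\<bar> \<le> K * L"
      by (simp add: abs_mult mult_mono')
  qed
qed

lemma bnd_pow: "bnd f \<Longrightarrow> bnd (\<lambda>h. f h ^ n)"
  by (induction n) (simp_all add: bnd_const bnd_mult)

lemma bnd_divide: "bnd f \<Longrightarrow> bnd (\<lambda>h. f h / k)"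
  using bnd_mult[of f "\<lambda>h. 1/k"] bnd_const by simp

lemma bnd_minus: "bnd f \<Longrightarrow> bnd (\<lambda>h. - f h)"
  using bnd_diff[of "\<lambda>h. 0" f] bnd_const by simp

lemma bnd_diffquot:
  fixes g :: "real \<Rightarrow> real"
  assumes "g differentiable (at 0)"
  shows "bnd (\<lambda>h. (g h - g 0) / h)"
proof -
  obtain D where "DERIV g 0 :> D"
    using assms DERIV_deriv_iff_real_differentiable by blast
  then have "((\<lambda>h. (g (0 + h) - g 0) / h) \<longlongrightarrow> D) (at 0)" by (simp add: DERIV_def)
  then have "((\<lambda>h. (g h - g 0) / h) \<longlongrightarrow> D) (at_right 0)"
    by (simp add: tendsto_mono[OF at_le[OF subset_UNIV]])
  then have "((\<lambda>h. \<bar>(g h - g 0) / h\<bar>) \<longlongrightarrow> \<bar>D\<bar>) (at_right 0)" by (rule tendsto_rabs)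
  then have "eventually (\<lambda>h. \<bar>(g h - g 0) / h\<bar> < \<bar>D\<bar> + 1) (at_right 0)"
    by (rule order_tendstoD(2)) simp
  then show ?thesis unfolding bnd_def
    by (intro exI[of _ "\<bar>D\<bar> + 1"]) (rule eventually_mono, assumption, simp)
qed

lemma smooth1_DERIV: "smooth1 u \<Longrightarrow> DERIV ((deriv ^^ m) u) t :> (deriv ^^ Suc m) u t"
  unfolding smooth1_def using DERIV_deriv_iff_real_differentiable by simp

lemma smooth1_bound:
  assumes "smooth1 u"
  shows "\<exists>M. \<forall>t\<in>{a..b}. \<bar>(deriv ^^ n) u t\<bar> \<le> M"
proof -
  have "continuous_on {a..b} ((deriv ^^ n) u)"
    using assms unfolding smooth1_def
    by (meson continuous_at_imp_continuous_on differentiable_imp_continuous_within)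
  then have "compact (((deriv ^^ n) u) ` {a..b})"
    by (rule compact_continuous_image[OF _ compact_Icc])
  then have "bounded (((deriv ^^ n) u) ` {a..b})" by (rule compact_imp_bounded)
  then show ?thesis unfolding bounded_real by auto
qed

lemma taylor_bnd:
  assumes u: "smooth1 u"
  shows "bnd (\<lambda>h. (u (x + k * h) - (u x + (deriv ^^ 1) u x * (k * h) + (deriv ^^ 2) u x / 2 * (k * h)^2
     + (deriv ^^ 3) u x / 6 * (k * h)^3 + (deriv ^^ 4) u x / 24 * (k * h)^4 + (deriv ^^ 5) u x / 120 * (k * h)^5)) / h^6)"
proof -
  obtain M where M: "\<forall>t\<in>{x - \<bar>k\<bar>..x + \<bar>k\<bar>}. \<bar>(deriv ^^ 6) u t\<bar> \<le> M"
    using smooth1_bound[OF u] by blast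
  have M0: "0 \<le> M" using M[rule_format, of x] by auto
  show ?thesis unfolding bnd_def
  proof (intro exI[of _ "M * k^6 / 720"], rule eventually_mono[OF eventually_at_right_real[OF zero_less_one]])
    fix h :: real assume h: "h \<in> {0<..<1}"
    show "\<bar>(u (x + k * h) - (u x + (deriv ^^ 1) u x * (k * h) + (deriv ^^ 2) u x / 2 * (k * h)^2
     + (deriv ^^ 3) u x / 6 * (k * h)^3 + (deriv ^^ 4) u x / 24 * (k * h)^4 + (deriv ^^ 5) u x / 120 * (k * h)^5)) / h^6\<bar>
      \<le> M * k^6 / 720"
    proof (cases "k = 0")
      case True then show ?thesis using M0 by simp
    next
      case False
      have hk: "\<bar>k * h\<bar> \<le> \<bar>k\<bar>" using h by (simp add: abs_mult mult_left_le)
      have "\<exists>t. (if x + k * h < x then x + k * h < t \<and> t < x else x < t \<and> t < x + k * h) \<and>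
        u (x + k * h) = (\<Sum>m<6. ((deriv ^^ m) u x / fact m) * (x + k * h - x)^m) + ((deriv ^^ 6) u t / fact 6) * (x + k * h - x)^6"
        apply (rule Taylor[where a = "x - \<bar>k\<bar>" and b = "x + \<bar>k\<bar>" and diff = "\<lambda>m. (deriv ^^ m) u"])
        using False h hk smooth1_DERIV[OF u] by (auto simp: abs_le_iff)
      then obtain t where t: "(if x + k * h < x then x + k * h < t \<and> t < x else x < t \<and> t < x + k * h)"
        and eq: "u (x + k * h) = (\<Sum>m<6. ((deriv ^^ m) u x / fact m) * (x + k * h - x)^m) + ((deriv ^^ 6) u t / fact 6) * (x + k * h - x)^6"
        by blast
      have tI: "t \<in> {x - \<bar>k\<bar>..x + \<bar>k\<bar>}" using t hk by (auto split: if_splits simp: abs_le_iff)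
      have eq2: "u (x + k * h) - (u x + (deriv ^^ 1) u x * (k * h) + (deriv ^^ 2) u x / 2 * (k * h)^2
     + (deriv ^^ 3) u x / 6 * (k * h)^3 + (deriv ^^ 4) u x / 24 * (k * h)^4 + (deriv ^^ 5) u x / 120 * (k * h)^5)
        = (deriv ^^ 6) u t / 720 * (k * h)^6"
        unfolding eq by (simp add: numeral_eq_Suc fact_numeral)
      have "\<bar>(deriv ^^ 6) u t / 720 * (k * h)^6 / h^6\<bar> = \<bar>(deriv ^^ 6) u t\<bar> * k^6 / 720"
        using h by (simp add: power_mult_distrib abs_mult)
      also have "\<dots> \<le> M * k^6 / 720"
        using M tI by (intro divide_right_mono mult_right_mono) auto
      finally show ?thesis unfolding eq2 .
    qed
  qed
qed

definition Et :: "real \<Rightarrow> real \<Rightarrow> real \<Rightarrow> real \<Rightarrow> real \<Rightarrow> real \<Rightarrow> real \<Rightarrow> real \<Rightarrow> real \<Rightarrow> real \<Rightarrow> real \<Rightarrow> real" where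
  "Et b c h pL pR eL eR A B rA rB = b * (eL + eR) / 2 + c * (eL * (2 * pL + h^6 * eL) + eR * (2 * pR + h^6 * eR)) / 2
     - c * ((eL - rA) * (2 * (pL - A) + h^6 * (eL - rA)) + (eR - rB) * (2 * (pR - B) + h^6 * (eR - rB))) / 6"

definition Fp :: "real \<Rightarrow> real \<Rightarrow> real \<Rightarrow> real \<Rightarrow> real \<Rightarrow> real \<Rightarrow> real" where
  "Fp b c pL pR A B = (b * pL + c * pL^2 + b * pR + c * pR^2) / 2 - c * ((pL - A)^2 + (pR - B)^2) / 6"

lemma face_split:
  fixes a b c h pL pR eL eR A B rA rB :: real
  shows "a + (b * (pL + h^6 * eL) + c * (pL + h^6 * eL)^2 + b * (pR + h^6 * eR) + c * (pR + h^6 * eR)^2) / 2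
     - c * (((pL + h^6 * eL) - (A + h^6 * rA))^2 + ((pR + h^6 * eR) - (B + h^6 * rB))^2) / 6
     = a + Fp b c pL pR A B + h^6 * Et b c h pL pR eL eR A B rA rB"
  unfolding Fp_def Et_def by (simp add: field_simps power2_eq_square)

lemma PF_alt:
  fixes a b c D wm2 wm1 w0 w1 w2 w3 :: real
  shows "PF a b c D wm2 wm1 w0 w1 w2 w3 = a + (b * ((-1/24) * w2 + (5/12) * w1 + (5/6) * w0 + (-1/4) * wm1 + (1/24) * wm2) + c * ((-1/24) * w2 + (5/12) * w1 + (5/6) * w0 + (-1/4) * wm1 + (1/24) * wm2)^2 + b * ((1/24) * w3 + (-1/4) * w2 + (5/6) * w1 + (5/12) * w0 + (-1/24) * wm1) + c * ((1/24) * w3 + (-1/4) * w2 + (5/6) * w1 + (5/12) * w0 + (-1/24) * wm1)^2) / 2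
     - c * ((((-1/24) * w2 + (5/12) * w1 + (5/6) * w0 + (-1/4) * wm1 + (1/24) * wm2) - w0)^2 + (((1/24) * w3 + (-1/4) * w2 + (5/6) * w1 + (5/12) * w0 + (-1/24) * wm1) - w1)^2) / 6 - D * (((1/24) * w3 + (-1/4) * w2 + (5/6) * w1 + (5/12) * w0 + (-1/24) * wm1) - ((-1/24) * w2 + (5/12) * w1 + (5/6) * w0 + (-1/4) * wm1 + (1/24) * wm2)) / 2"
  unfolding PF_def Let_def by (simp add: field_simps power2_eq_square)

lemma alg_UU:
  fixes U0 U1 U2 U3 U4 U5 b c :: real
  shows "Fp b c ((-2) * U5 + (1/6) * U4 + (1/6) * U2 + (1/2) * U1 + (1) * U0) ((3) * U5 + (1/6) * U4 + (1/6) * U2 + (1/2) * U1 + (1) * U0) ((1) * U0) ((1) * U5 + (1) * U4 + (1) * U3 + (1) * U2 + (1) * U1 + (1) * U0)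
       - Fp b c ((-3) * U5 + (1/6) * U4 + (1/6) * U2 + (-1/2) * U1 + (1) * U0) ((2) * U5 + (1/6) * U4 + (1/6) * U2 + (-1/2) * U1 + (1) * U0) ((-1) * U5 + (1) * U4 + (-1) * U3 + (1) * U2 + (-1) * U1 + (1) * U0) ((1) * U0)
       - ((b + 2 * c * U0) * (U1 + U5) - 5/9 * c * U2 * U3)
     = 5/3 * c * U4 * U5 - 5/9 * c * U3 * U4 + 5/3 * c * U2 * U5"
  unfolding Fp_def by (simp add: field_simps power2_eq_square)


lemma combine:
  fixes P0' P1' a F0 F1 h6 E0 E1 DD0 DD1 TU SU HT S Dp :: real
  assumes "P0' = a + F0 + h6 * E0 - DD0" "P1' = a + F1 + h6 * E1 - DD1" "F0 - F1 - TU = SU" "TU = HT" "SU = h6 * S" "DD0 - DD1 = h6 * Dp"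
  shows "P0' - P1' - HT = h6 * (S + E0 - E1 - Dp)"
  using assms by (simp add: algebra_simps)

lemma alg_all:
  fixes h u0 u1 u2 u3 u4 u5 r0 r1 r2 r3 r4 r5 r6 a b c P0 q1 q2 D1 D2 wm3 wm2 wm1 w0 w1 w2 w3 :: real
  assumes hD1: "D1 = P0 + h * q1" and hD2: "D2 = P0 + h * q2"
    and w0: "wm3 = u0 + u1 * ((-3) * h) + u2 / 2 * ((-3) * h)^2 + u3 / 6 * ((-3) * h)^3 + u4 / 24 * ((-3) * h)^4 + u5 / 120 * ((-3) * h)^5 + h^6 * r0"
    and w1: "wm2 = u0 + u1 * ((-2) * h) + u2 / 2 * ((-2) * h)^2 + u3 / 6 * ((-2) * h)^3 + u4 / 24 * ((-2) * h)^4 + u5 / 120 * ((-2) * h)^5 + h^6 * r1"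
    and w2: "wm1 = u0 + u1 * ((-1) * h) + u2 / 2 * ((-1) * h)^2 + u3 / 6 * ((-1) * h)^3 + u4 / 24 * ((-1) * h)^4 + u5 / 120 * ((-1) * h)^5 + h^6 * r2"
    and w3: "w0 = u0 + u1 * (0 * h) + u2 / 2 * (0 * h)^2 + u3 / 6 * (0 * h)^3 + u4 / 24 * (0 * h)^4 + u5 / 120 * (0 * h)^5 + h^6 * r3"
    and w4: "w1 = u0 + u1 * (1 * h) + u2 / 2 * (1 * h)^2 + u3 / 6 * (1 * h)^3 + u4 / 24 * (1 * h)^4 + u5 / 120 * (1 * h)^5 + h^6 * r4"
    and w5: "w2 = u0 + u1 * (2 * h) + u2 / 2 * (2 * h)^2 + u3 / 6 * (2 * h)^3 + u4 / 24 * (2 * h)^4 + u5 / 120 * (2 * h)^5 + h^6 * r5"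
    and w6: "w3 = u0 + u1 * (3 * h) + u2 / 2 * (3 * h)^2 + u3 / 6 * (3 * h)^3 + u4 / 24 * (3 * h)^4 + u5 / 120 * (3 * h)^5 + h^6 * r6"
  shows "PF a b c D1 wm2 wm1 w0 w1 w2 w3 - PF a b c D2 wm3 wm2 wm1 w0 w1 w2 - h * ((b + 2 * c * u0) * u1 + (1/120 * (b + 2 * c * u0) * u5 - 5/216 * (2 * c) * u2 * u3) * h^4)
     = h^6 * (5/3 * c * (u4 * u5 * h^3 / 2880) - 5/9 * c * (u3 * u4 * h / 144) + 5/3 * c * (u2 * u5 * h / 240) + Et b c h ((-2) * (u5 * h^5 / 120) + (1/6) * (u4 * h^4 / 24) + (1/6) * (u2 * h^2 / 2) + (1/2) * (u1 * h) + (1) * (u0)) ((3) * (u5 * h^5 / 120) + (1/6) * (u4 * h^4 / 24) + (1/6) * (u2 * h^2 / 2) + (1/2) * (u1 * h) + (1) * (u0)) ((-1/24) * r5 + (5/12) * r4 + (5/6) * r3 + (-1/4) * r2 + (1/24) * r1) ((1/24) * r6 + (-1/4) * r5 + (5/6) * r4 + (5/12) * r3 + (-1/24) * r2) ((1) * (u0)) ((1) * (u5 * h^5 / 120) + (1) * (u4 * h^4 / 24) + (1) * (u3 * h^3 / 6) + (1) * (u2 * h^2 / 2) + (1) * (u1 * h) + (1) * (u0)) r3 r4 - Et b c h ((-3) * (u5 * h^5 / 120) + (1/6) * (u4 * h^4 / 24) + (1/6) * (u2 * h^2 / 2) + (-1/2) * (u1 * h) + (1) * (u0)) ((2) * (u5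 * h^5 / 120) + (1/6) * (u4 * h^4 / 24) + (1/6) * (u2 * h^2 / 2) + (-1/2) * (u1 * h) + (1) * (u0)) ((-1/24) * r4 + (5/12) * r3 + (5/6) * r2 + (-1/4) * r1 + (1/24) * r0) ((1/24) * r5 + (-1/4) * r4 + (5/6) * r3 + (5/12) * r2 + (-1/24) * r1) ((-1) * (u5 * h^5 / 120) + (1) * (u4 * h^4 / 24) + (-1) * (u3 * h^3 / 6) + (1) * (u2 * h^2 / 2) + (-1) * (u1 * h) + (1) * (u0)) ((1) * (u0)) r2 r3 - ((q1 - q2) * 5 * (u5 / 120) + (P0 + h * q1) * (((1/24) * r6 + (-1/4) * r5 + (5/6) * r4 + (5/12) * r3 + (-1/24) * r2) - ((-1/24) * r5 + (5/12) * r4 + (5/6) * r3 + (-1/4) * r2 + (1/24) * r1)) - (P0 + h * q2) * (((1/24) * r5 + (-1/4) * r4 + (5/6) * r3 + (5/12) * r2 + (-1/24) * r1) - ((-1/24) * r4 + (5/12) * r3 + (5/6) * r2 + (-1/4) * r1 + (1/24) * r0))) / 2)"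
proof -
  define U0 where "U0 = u0"
  define U1 where "U1 = u1 * h"
  define U2 where "U2 = u2 * h^2 / 2"
  define U3 where "U3 = u3 * h^3 / 6"
  define U4 where "U4 = u4 * h^4 / 24"
  define U5 where "U5 = u5 * h^5 / 120"
  note U_defs = U0_def U1_def U2_def U3_def U4_def U5_def
  have wU0: "wm3 = U0 + (-3) * U1 + 9 * U2 + (-27) * U3 + 81 * U4 + (-243) * U5 + h^6 * r0" unfolding w0 U_defs by (simp add: field_simps power_mult_distrib)
  have wU1: "wm2 = U0 + (-2) * U1 + 4 * U2 + (-8) * U3 + 16 * U4 + (-32) * U5 + h^6 * r1" unfolding w1 U_defs by (simp add: field_simps power_mult_distrib)
  have wU2: "wm1 = U0 + (-1) * U1 + 1 * U2 + (-1) * U3 + 1 * U4 + (-1) * U5 + h^6 * r2" unfolding w2 U_defs by (simp add: field_simps power_mult_distrib)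
  have wU3: "w0 = U0 + 0 * U1 + 0 * U2 + 0 * U3 + 0 * U4 + 0 * U5 + h^6 * r3" unfolding w3 U_defs by (simp add: field_simps power_mult_distrib)
  have wU4: "w1 = U0 + 1 * U1 + 1 * U2 + 1 * U3 + 1 * U4 + 1 * U5 + h^6 * r4" unfolding w4 U_defs by (simp add: field_simps power_mult_distrib)
  have wU5: "w2 = U0 + 2 * U1 + 4 * U2 + 8 * U3 + 16 * U4 + 32 * U5 + h^6 * r5" unfolding w5 U_defs by (simp add: field_simps power_mult_distrib)
  have wU6: "w3 = U0 + 3 * U1 + 9 * U2 + 27 * U3 + 81 * U4 + 243 * U5 + h^6 * r6" unfolding w6 U_defs by (simp add: field_simps power_mult_distrib)
  have X0: "(-1/24) * w2 + (5/12) * w1 + (5/6) * w0 + (-1/4) * wm1 + (1/24) * wm2 = ((-2) * U5 + (1/6) * U4 + (1/6) * U2 + (1/2) * U1 + (1) * U0) + h^6 * ((-1/24) * r5 + (5/12) * r4 + (5/6) * r3 + (-1/4) * r2 + (1/24) * r1)" unfolding wU1 wU2 wU3 wU4 wU5 by (simp add: field_simps)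
  have Y0: "(1/24) * w3 + (-1/4) * w2 + (5/6) * w1 + (5/12) * w0 + (-1/24) * wm1 = ((3) * U5 + (1/6) * U4 + (1/6) * U2 + (1/2) * U1 + (1) * U0) + h^6 * ((1/24) * r6 + (-1/4) * r5 + (5/6) * r4 + (5/12) * r3 + (-1/24) * r2)" unfolding wU2 wU3 wU4 wU5 wU6 by (simp add: field_simps)
  have X1: "(-1/24) * w1 + (5/12) * w0 + (5/6) * wm1 + (-1/4) * wm2 + (1/24) * wm3 = ((-3) * U5 + (1/6) * U4 + (1/6) * U2 + (-1/2) * U1 + (1) * U0) + h^6 * ((-1/24) * r4 + (5/12) * r3 + (5/6) * r2 + (-1/4) * r1 + (1/24) * r0)" unfolding wU0 wU1 wU2 wU3 wU4 by (simp add: field_simps)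
  have Y1: "(1/24) * w2 + (-1/4) * w1 + (5/6) * w0 + (5/12) * wm1 + (-1/24) * wm2 = ((2) * U5 + (1/6) * U4 + (1/6) * U2 + (-1/2) * U1 + (1) * U0) + h^6 * ((1/24) * r5 + (-1/4) * r4 + (5/6) * r3 + (5/12) * r2 + (-1/24) * r1)" unfolding wU1 wU2 wU3 wU4 wU5 by (simp add: field_simps)
  have W0: "w0 = ((1) * U0) + h^6 * r3" unfolding wU3 by simp
  have W1: "w1 = ((1) * U5 + (1) * U4 + (1) * U3 + (1) * U2 + (1) * U1 + (1) * U0) + h^6 * r4" unfolding wU4 by simp
  have Wm1: "wm1 = ((-1) * U5 + (1) * U4 + (-1) * U3 + (1) * U2 + (-1) * U1 + (1) * U0) + h^6 * r2" unfolding wU2 by simp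
  have e1: "PF a b c D1 wm2 wm1 w0 w1 w2 w3 = a + Fp b c ((-2) * U5 + (1/6) * U4 + (1/6) * U2 + (1/2) * U1 + (1) * U0) ((3) * U5 + (1/6) * U4 + (1/6) * U2 + (1/2) * U1 + (1) * U0) ((1) * U0) ((1) * U5 + (1) * U4 + (1) * U3 + (1) * U2 + (1) * U1 + (1) * U0) + h^6 * Et b c h ((-2) * U5 + (1/6) * U4 + (1/6) * U2 + (1/2) * U1 + (1) * U0) ((3) * U5 + (1/6) * U4 + (1/6) * U2 + (1/2) * U1 + (1) * U0) ((-1/24) * r5 + (5/12) * r4 + (5/6) * r3 + (-1/4) * r2 + (1/24) * r1) ((1/24) * r6 + (-1/4) * r5 + (5/6) * r4 + (5/12) * r3 + (-1/24) * r2) ((1) * U0) ((1) * U5 + (1) * U4 + (1) * U3 + (1) * U2 + (1) * U1 + (1) * U0) r3 r4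
      - D1 * ((((3) * U5 + (1/6) * U4 + (1/6) * U2 + (1/2) * U1 + (1) * U0) + h^6 * ((1/24) * r6 + (-1/4) * r5 + (5/6) * r4 + (5/12) * r3 + (-1/24) * r2)) - (((-2) * U5 + (1/6) * U4 + (1/6) * U2 + (1/2) * U1 + (1) * U0) + h^6 * ((-1/24) * r5 + (5/12) * r4 + (5/6) * r3 + (-1/4) * r2 + (1/24) * r1))) / 2"
    unfolding PF_alt X0 Y0 unfolding W0 W1 face_split ..
  have e2: "PF a b c D2 wm3 wm2 wm1 w0 w1 w2 = a + Fp b c ((-3) * U5 + (1/6) * U4 + (1/6) * U2 + (-1/2) * U1 + (1) * U0) ((2) * U5 + (1/6) * U4 + (1/6) * U2 + (-1/2) * U1 + (1) * U0) ((-1) * U5 + (1) * U4 + (-1) * U3 + (1) * U2 + (-1) * U1 + (1) * U0) ((1) * U0) + h^6 * Et b c h ((-3) * U5 + (1/6) * U4 + (1/6) * U2 + (-1/2) * U1 + (1) * U0) ((2) * U5 + (1/6) * U4 + (1/6) * U2 + (-1/2) * U1 + (1) * U0) ((-1/24) * r4 + (5/12) * r3 + (5/6) * r2 + (-1/4) * r1 + (1/24) * r0) ((1/24) * r5 + (-1/4) * r4 + (5/6) * r3 + (5/12) * r2 + (-1/24) * r1) ((-1) * U5 + (1) * U4 + (-1) * U3 + (1) * U2 + (-1) * U1 + (1) * U0) ((1) * U0) r2 r3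
      - D2 * ((((2) * U5 + (1/6) * U4 + (1/6) * U2 + (-1/2) * U1 + (1) * U0) + h^6 * ((1/24) * r5 + (-1/4) * r4 + (5/6) * r3 + (5/12) * r2 + (-1/24) * r1)) - (((-3) * U5 + (1/6) * U4 + (1/6) * U2 + (-1/2) * U1 + (1) * U0) + h^6 * ((-1/24) * r4 + (5/12) * r3 + (5/6) * r2 + (-1/4) * r1 + (1/24) * r0))) / 2"
    unfolding PF_alt X1 Y1 unfolding Wm1 W0 face_split ..
  have e3: "Fp b c ((-2) * U5 + (1/6) * U4 + (1/6) * U2 + (1/2) * U1 + (1) * U0) ((3) * U5 + (1/6) * U4 + (1/6) * U2 + (1/2) * U1 + (1) * U0) ((1) * U0) ((1) * U5 + (1) * U4 + (1) * U3 + (1) * U2 + (1) * U1 + (1) * U0) - Fp b c ((-3) * U5 + (1/6) * U4 + (1/6) * U2 + (-1/2) * U1 + (1) * U0) ((2) * U5 + (1/6) * U4 + (1/6) * U2 + (-1/2) * U1 + (1) * U0) ((-1) * U5 + (1) * U4 + (-1) * U3 + (1) * U2 + (-1) * U1 + (1) * U0) ((1) * U0)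
       - ((b + 2 * c * U0) * (U1 + U5) - 5/9 * c * U2 * U3)
     = 5/3 * c * U4 * U5 - 5/9 * c * U3 * U4 + 5/3 * c * U2 * U5"
    by (rule alg_UU)
  have h5: "h^5 = h * h^4" by (simp add: power_Suc[symmetric] del: power_Suc)
  have e4: "(b + 2 * c * U0) * (U1 + U5) - 5/9 * c * U2 * U3 = h * ((b + 2 * c * u0) * u1 + (1/120 * (b + 2 * c * u0) * u5 - 5/216 * (2 * c) * u2 * u3) * h^4)"
    unfolding U_defs by (simp add: field_simps eval_nat_numeral)
  have e5: "5/3 * c * U4 * U5 - 5/9 * c * U3 * U4 + 5/3 * c * U2 * U5 = h^6 * (5/3 * c * (u4 * u5 * h^3 / 2880) - 5/9 * c * (u3 * u4 * h / 144) + 5/3 * c * (u2 * u5 * h / 240))"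
    unfolding U_defs by (simp add: field_simps eval_nat_numeral)
  have e6: "D1 * ((((3) * U5 + (1/6) * U4 + (1/6) * U2 + (1/2) * U1 + (1) * U0) + h^6 * ((1/24) * r6 + (-1/4) * r5 + (5/6) * r4 + (5/12) * r3 + (-1/24) * r2)) - (((-2) * U5 + (1/6) * U4 + (1/6) * U2 + (1/2) * U1 + (1) * U0) + h^6 * ((-1/24) * r5 + (5/12) * r4 + (5/6) * r3 + (-1/4) * r2 + (1/24) * r1))) / 2
      - D2 * ((((2) * U5 + (1/6) * U4 + (1/6) * U2 + (-1/2) * U1 + (1) * U0) + h^6 * ((1/24) * r5 + (-1/4) * r4 + (5/6) * r3 + (5/12) * r2 + (-1/24) * r1)) - (((-3) * U5 + (1/6) * U4 + (1/6) * U2 + (-1/2) * U1 + (1) * U0) + h^6 * ((-1/24) * r4 + (5/12) * r3 + (5/6) * r2 + (-1/4) * r1 + (1/24) * r0))) / 2 = h^6 * (((q1 - q2) * 5 * (u5 / 120) + (P0 + h * q1) * (((1/24) * r6 + (-1/4) * r5 + (5/6) * r4 + (5/12) * r3 + (-1/24) * r2) - ((-1/24) * r5 + (5/12) * r4 + (5/6) * r3 + (-1/4) * r2 + (1/24) * r1)) - (P0 + h * q2) * (((1/24) * r5 + (-1/4) * r4 + (5/6) * r3 + (5/12) * r2 + (-1/24) * r1) - ((-1/24) * r4 + (5/12) * r3 + (5/6) * r2 + (-1/4) * r1 + (1/24) * r0))) / 2)"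
    unfolding hD1 hD2 U_defs by (simp add: field_simps eval_nat_numeral)
  show ?thesis
    using combine[OF e1 e2 e3 e4 e5 e6] unfolding U_defs .
qed

theorem mainTheorem7:
  fixes u f D :: "real \<Rightarrow> real" and Dbar :: "real \<Rightarrow> real \<Rightarrow> real" and x :: real
  assumes u_smooth: "smooth1 u"
    and f_quad: "\<exists>a b c. \<forall>v. f v = a + b * v + c * v^2"
    and D_smooth: "smooth1 D"
    and Dbar_smooth: "smooth2 Dbar"
    and Dbar_sym: "\<forall>a b. Dbar a b = Dbar b a"
    and Dbar_diag: "\<forall>v. Dbar v v = D v"
  shows "\<exists>C \<delta>. \<delta> > 0 \<and> (\<forall>h. 0 < h \<and> h < \<delta> \<longrightarrow>
           \<bar>QFSR_err f Dbar u h x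
             - (deriv (\<lambda>t. f (u t)) x
                + (1/120 * deriv f (u x) * (deriv ^^ 5) u x
                   - 5/216 * deriv (deriv f) (u x) * (deriv ^^ 2) u x * (deriv ^^ 3) u x) * h^4)\<bar>
           \<le> C * h^5)"
proof -
  obtain a b c where fq: "\<forall>v. f v = a + b * v + c * v^2" using f_quad by blast
  have fdef: "f = (\<lambda>v. a + b * v + c * v^2)" by (rule ext) (simp add: fq)
  define u0 where "u0 = u x"
  define u1 where "u1 = (deriv ^^ 1) u x"
  define u2 where "u2 = (deriv ^^ 2) u x"
  define u3 where "u3 = (deriv ^^ 3) u x"
  define u4 where "u4 = (deriv ^^ 4) u x"
  define u5 where "u5 = (deriv ^^ 5) u x"
  define rr where "rr = (\<lambda>k h. (u (x + k * h) - (u0 + u1 * (k * h) + u2 / 2 * (k * h)^2 + u3 / 6 * (k * h)^3 + u4 / 24 * (k * h)^4 + u5 / 120 * (k * h)^5)) / h^6)"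
  have rb: "bnd (rr k)" for k
    unfolding rr_def u0_def u1_def u2_def u3_def u4_def u5_def by (rule taylor_bnd[OF u_smooth])
  have rr_eq: "u (x + k * h) = u0 + u1 * (k * h) + u2 / 2 * (k * h)^2 + u3 / 6 * (k * h)^3 + u4 / 24 * (k * h)^4 + u5 / 120 * (k * h)^5 + h^6 * rr k h" if "h \<noteq> 0" for k h
    using that unfolding rr_def by simp
  define Db where "Db = (\<lambda>q. Dbar (fst q) (snd q))"
  have Dbd: "Db differentiable (at p)" for p
    using Dbar_smooth unfolding smooth2_def Db_def by (metis funpow_0)
  have ud: "u differentiable (at t)" for t
    using u_smooth unfolding smooth1_def by (metis funpow_0)
  define \<phi> where "\<phi> = (\<lambda>t. Dbar (u x) (u (x + t)))"
  define \<psi> where "\<psi> = (\<lambda>t. Dbar (u x) (u (x - t)))"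
  have ud1: "(\<lambda>t. u (x + t)) differentiable (at 0)"
  proof -
    have "(u \<circ> (\<lambda>t. x + t)) differentiable (at 0)"
      by (rule differentiable_chain_at) (auto intro!: derivative_intros ud)
    then show ?thesis by (simp add: comp_def)
  qed
  have ud2: "(\<lambda>t. u (x - t)) differentiable (at 0)"
  proof -
    have "(u \<circ> (\<lambda>t. x + - t)) differentiable (at 0)"
      by (rule differentiable_chain_at) (auto intro!: derivative_intros ud)
    then show ?thesis by (simp add: comp_def)
  qed
  have phid: "\<phi> differentiable (at 0)"
  proof -
    have "(Db \<circ> (\<lambda>t. (u x, u (x + t)))) differentiable (at 0)"
      by (rule differentiable_chain_at) (auto intro!: differentiable_Pair ud1 Dbd)
    then show ?thesis by (simp add: comp_def Db_def \<phi>_def)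
  qed
  have psid: "\<psi> differentiable (at 0)"
  proof -
    have "(Db \<circ> (\<lambda>t. (u x, u (x - t)))) differentiable (at 0)"
      by (rule differentiable_chain_at) (auto intro!: differentiable_Pair ud2 Dbd)
    then show ?thesis by (simp add: comp_def Db_def \<psi>_def)
  qed
  define q1f where "q1f = (\<lambda>h. (\<phi> h - \<phi> 0) / h)"
  define q2f where "q2f = (\<lambda>h. (\<psi> h - \<psi> 0) / h)"
  have q1b: "bnd q1f" unfolding q1f_def by (rule bnd_diffquot[OF phid])
  have q2b: "bnd q2f" unfolding q2f_def by (rule bnd_diffquot[OF psid])
  have psi0: "\<psi> 0 = \<phi> 0" unfolding \<phi>_def \<psi>_def by simp
  define Qf where "Qf = (\<lambda>h. 5/3 * c * (u4 * u5 * h^3 / 2880) - 5/9 * c * (u3 * u4 * h / 144) + 5/3 * c * (u2 * u5 * h / 240) + Et b c h ((-2) * (u5 * h^5 / 120) + (1/6) * (u4 * h^4 / 24) + (1/6) * (u2 * h^2 / 2) + (1/2) * (u1 * h) + (1) * (u0)) ((3) * (u5 * h^5 / 120) + (1/6) * (u4 * h^4 / 24) + (1/6) * (u2 * h^2 / 2) + (1/2) * (u1 * h) + (1) * (u0)) ((-1/24) * (rr (2) h) + (5/12) * (rr (1) h) + (5/6) * (rr (0) h) + (-1/4) * (rr (-1) h) + (1/24) * (rr (-2) h)) ((1/24) * (rr (3) h) + (-1/4) * (rr (2) h) + (5/6) * (rr (1) h) + (5/12) * (rr (0) h) + (-1/24) * (rr (-1) h)) ((1) * (u0)) ((1) * (u5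 * h^5 / 120) + (1) * (u4 * h^4 / 24) + (1) * (u3 * h^3 / 6) + (1) * (u2 * h^2 / 2) + (1) * (u1 * h) + (1) * (u0)) (rr (0) h) (rr (1) h) - Et b c h ((-3) * (u5 * h^5 / 120) + (1/6) * (u4 * h^4 / 24) + (1/6) * (u2 * h^2 / 2) + (-1/2) * (u1 * h) + (1) * (u0)) ((2) * (u5 * h^5 / 120) + (1/6) * (u4 * h^4 / 24) + (1/6) * (u2 * h^2 / 2) + (-1/2) * (u1 * h) + (1) * (u0)) ((-1/24) * (rr (1) h) + (5/12) * (rr (0) h) + (5/6) * (rr (-1) h) + (-1/4) * (rr (-2) h) + (1/24) * (rr (-3) h)) ((1/24) * (rr (2) h) + (-1/4) * (rr (1) h) + (5/6) * (rr (0) h) + (5/12) * (rr (-1) h) + (-1/24) * (rr (-2) h)) ((-1) * (u5 * h^5 / 120) + (1) * (u4 * h^4 / 24) + (-1) * (u3 * h^3 / 6) + (1) * (u2 * h^2 / 2) + (-1) * (u1 * h) + (1) * (u0)) ((1) * (u0)) (rr (-1) h) (rr (0) h) - (((q1f h) - (q2f h)) * 5 * (u5 / 120) + ((\<phi> 0) + h * (q1f h)) * (((1/24) * (rr (3) h) + (-1/4) * (rr (2) h) + (5/6) * (rr (1) h) + (5/12) * (rr (0) h) + (-1/24) * (rr (-1) h)) - ((-1/24) * (rr (2) h) + (5/12) * (rr (1) h) + (5/6) * (rr (0) h) + (-1/4) * (rr (-1) h) + (1/24) * (rr (-2) h))) - ((\<phi> 0) + h * (q2f h)) * (((1/24) *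 (rr (2) h) + (-1/4) * (rr (1) h) + (5/6) * (rr (0) h) + (5/12) * (rr (-1) h) + (-1/24) * (rr (-2) h)) - ((-1/24) * (rr (1) h) + (5/12) * (rr (0) h) + (5/6) * (rr (-1) h) + (-1/4) * (rr (-2) h) + (1/24) * (rr (-3) h)))) / 2)"
  have "bnd Qf" unfolding Qf_def Et_def
    by (intro bnd_add bnd_diff bnd_mult bnd_pow bnd_const bnd_id bnd_divide rb q1b q2b)
  then obtain K where K: "eventually (\<lambda>h. \<bar>Qf h\<bar> \<le> K) (at_right 0)" unfolding bnd_def by blast
  then obtain \<delta> where d0: "\<delta> > 0" and dK: "\<forall>h>0. h < \<delta> \<longrightarrow> \<bar>Qf h\<bar> \<le> K"
    unfolding eventually_at_right_field by auto
  have D1: "DERIV u x :> u1" using smooth1_DERIV[OF u_smooth, of 0 x] by (simp add: u1_def)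
  have "DERIV (\<lambda>t. f (u t)) x :> (b + 2 * c * u0) * u1"
    unfolding fdef u0_def by (rule derivative_eq_intros D1 refl | simp add: algebra_simps power2_eq_square)+
  then have dfu: "deriv (\<lambda>t. f (u t)) x = (b + 2 * c * u0) * u1" by (rule DERIV_imp_deriv)
  have tgt: "deriv (\<lambda>t. f (u t)) x
                + (1/120 * deriv f (u x) * (deriv ^^ 5) u x
                   - 5/216 * deriv (deriv f) (u x) * (deriv ^^ 2) u x * (deriv ^^ 3) u x) * h^4
     = (b + 2 * c * u0) * u1 + (1/120 * (b + 2 * c * u0) * u5 - 5/216 * (2 * c) * u2 * u3) * h^4" for h
    unfolding dfu unfolding fdef deriv_quad deriv_lin u0_def u2_def u3_def u5_def by simp
  show ?thesis
  proof (intro exI conjI allI impI)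
    show "\<delta> > 0" by (rule d0)
    fix h :: real assume hh: "0 < h \<and> h < \<delta>"
    then have h0: "h \<noteq> 0" and hp: "0 < h" by auto
    have P1: "Phi (1/3) (-2/3) (2/3) f Dbar u h x
      = PF a b c (\<phi> h) (u (x + (-2) * h)) (u (x + (-1) * h)) (u (x + 0 * h)) (u (x + 1 * h)) (u (x + 2 * h)) (u (x + 3 * h))"
      unfolding fdef Phi_expand[OF h0] \<phi>_def by simp
    have P2: "Phi (1/3) (-2/3) (2/3) f Dbar u h (x - h)
      = PF a b c (\<psi> h) (u (x + (-3) * h)) (u (x + (-2) * h)) (u (x + (-1) * h)) (u (x + 0 * h)) (u (x + 1 * h)) (u (x + 2 * h))"
      unfolding fdef Phi_expand[OF h0] \<psi>_def using Dbar_sym by (simp add: algebra_simps)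
    have A: "PF a b c (\<phi> h) (u (x + (-2) * h)) (u (x + (-1) * h)) (u (x + 0 * h)) (u (x + 1 * h)) (u (x + 2 * h)) (u (x + 3 * h))
      - PF a b c (\<psi> h) (u (x + (-3) * h)) (u (x + (-2) * h)) (u (x + (-1) * h)) (u (x + 0 * h)) (u (x + 1 * h)) (u (x + 2 * h))
      - h * ((b + 2 * c * u0) * u1 + (1/120 * (b + 2 * c * u0) * u5 - 5/216 * (2 * c) * u2 * u3) * h^4)
      = h^6 * Qf h"
    proof -
      have E1: "\<phi> h = \<phi> 0 + h * q1f h" unfolding q1f_def using h0 by simp
      have E2: "\<psi> h = \<phi> 0 + h * q2f h" unfolding q2f_def psi0[symmetric] using h0 by simp
      show ?thesis unfolding Qf_def
        by (rule alg_all[OF E1 E2 rr_eq[OF h0, of "-3"] rr_eq[OF h0, of "-2"] rr_eq[OF h0, of "-1"]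
          rr_eq[OF h0, of 0] rr_eq[OF h0, of 1] rr_eq[OF h0, of 2] rr_eq[OF h0, of 3]])
    qed
    have "\<bar>QFSR_err f Dbar u h x - (deriv (\<lambda>t. f (u t)) x
                + (1/120 * deriv f (u x) * (deriv ^^ 5) u x
                   - 5/216 * deriv (deriv f) (u x) * (deriv ^^ 2) u x * (deriv ^^ 3) u x) * h^4)\<bar>
        = \<bar>h^6 * Qf h / h\<bar>"
      unfolding tgt QFSR_err_def P1 P2 A[symmetric] using h0 by (simp add: field_simps)
    also have "\<dots> = h^5 * \<bar>Qf h\<bar>" using hp by (simp add: abs_mult power_eq_if)
    also have "\<dots> \<le> K * h^5" using dK hh by (simp add: mult_left_mono mult.commute)
    finally show "\<bar>QFSR_err f Dbar u h x - (deriv (\<lambda>t. f (u t)) x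
                + (1/120 * deriv f (u x) * (deriv ^^ 5) u x
                   - 5/216 * deriv (deriv f) (u x) * (deriv ^^ 2) u x * (deriv ^^ 3) u x) * h^4)\<bar>
        \<le> K * h^5" .
  qed
qed

end
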